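(* Let $n,m,p\in\mathbb{N}$ with $m\ge p$, $A\in\mathbb{R}^{n\times n}$, $B\in\mathbb{R}^{n\times m}$, $C\in\mathbb{R}^{p\times n}$, and let $f:\mathbb{R}\times\mathbb{R}^n\times\mathbb{R}^m\to\mathbb{R}^n$ be continuous and bounded. Assume: (P1) $L\in\mathcal{C}^\infty(\mathbb{R}\to\mathbb{R}^{m\times m})$ is such that $L,\dot L,\ldots,L^{(n)}$ are bounded and there is $q\in\mathbb{N}$ with $\operatorname{rk} BL(t)=q\ge p$ for all $t\in\mathbb{R}$; (P2) there is $r\in\mathbb{N}$ such that $CA^kBL(t)=0$ for all $t\in\mathbb{R}$ and $CA^kf(t,x,u)=0$ for all $(t,x,u)\in\mathbb{R}\times\mathbb{R}^n\times\mathbb{R}^m$, for $k=0,\ldots,r-2$, and the matrix $\Gamma:=CA^{r-1}B\in\mathbb{R}^{p\times m}$ satisfies $\operatorname{rk}\Gamma L(t)=p$ for all $t\in\mathbb{R}$. Let $\mathcal{B}(t)$, $\mathcal{C}$, $\rho$, $V$, $\mathcal{N}(t)$ and $U(t)$ be defined as in the context. Then for all $t\in\mathbb{R}$ we have $\rho=\operatorname{rk}\mathcal{C}=\operatorname{rk}\mathcal{C}\mathcal{B}(t)=pr$, and, viewing $\mathcal{C}\mathcal{B}(t)\in\mathbb{R}^{rp\times rm}$ as an $r\times r$ block matrix with blocks $(\mathcal{C}\mathcal{B}(t))_{i,j}\in\mathbb{R}^{p\times m}$, $i,j=1,\ldots,r$, we have $(\mathcal{C}\mathcal{B}(t))_{i,j}=0$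 whenever $i+j\le r$ and $(\mathcal{C}\mathcal{B}(t))_{i,j}=(-1)^{j-1}\Gamma L(t)$ whenever $i+j=r+1$ (the blocks with $i+j>r+1$ are not specified). Furthermore, $U(t)$ is invertible for all $t\in\mathbb{R}$ with $$U(t)^{-1}=\big[\mathcal{B}(t)\big(\mathcal{C}\mathcal{B}(t)\big)^\dagger,\ V\big].$$
   Context: $M^\dagger$ denotes the Moore–Penrose pseudoinverse and $\operatorname{rk}$ the rank. For a matrix function $M$, $(\tfrac{d}{dt}-A)(M(t)):=\dot M(t)-AM(t)$, applied iteratively for powers. Define for $t\in\mathbb{R}$: $\mathcal{B}(t):=\big[BL(t),\ (\tfrac{d}{dt}-A)(BL(t)),\ \ldots,\ (\tfrac{d}{dt}-A)^{r-1}(BL(t))\big]\in\mathbb{R}^{n\times rm}$; $\mathcal{C}:=\big[C^\top,(CA)^\top,\ldots,(CA^{r-1})^\top\big]^\top\in\mathbb{R}^{rp\times n}$; $\rho:=\operatorname{rk}\mathcal{C}$; $V\in\mathbb{R}^{n\times(n-\rho)}$ any matrix with $\operatorname{im}V=\ker\mathcal{C}$; $\mathcal{N}(t):=V^\dagger\big[I_n-\mathcal{B}(t)(\mathcal{C}\mathcal{B}(t))^\dagger\mathcal{C}\big]\in\mathbb{R}^{(n-\rho)\times n}$; $U(t):=\begin{bmatrix}\mathcal{C}\\ \mathcal{N}(t)\end{bmatrix}\in\mathbb{R}^{(n-\rho+pr)\times n}$. *)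

theory Defs
  imports Complex_Main "HOL-Analysis.Derivative" "Jordan_Normal_Form.DL_Rank" "Jordan_Normal_Form.Matrix_Kernel"
begin

definition rk :: "real mat \<Rightarrow> nat" where
  "rk M = vec_space.rank (dim_row M) M"

definition pinv :: "real mat \<Rightarrow> real mat" where
  "pinv M = (THE X. X \<in> carrier_mat (dim_col M) (dim_row M) \<and>
      M * X * M = M \<and> X * M * X = X \<and>
      transpose_mat (M * X) = M * X \<and> transpose_mat (X * M) = X * M)"

definition mat_image :: "real mat \<Rightarrow> real vec set" where
  "mat_image M = {M *\<^sub>v x | x. x \<in> carrier_vec (dim_col M)}"

definition hcat :: "real mat \<Rightarrow> real mat \<Rightarrow> real mat" where
  "hcat X Y = four_block_mat X Y (0\<^sub>m 0 (dim_col X)) (0\<^sub>m 0 (dim_col Y))"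

definition vnorm :: "real vec \<Rightarrow> real" where
  "vnorm v = sqrt (\<Sum>i<dim_vec v. (v $ i)^2)"

definition mderiv :: "(real \<Rightarrow> real mat) \<Rightarrow> real \<Rightarrow> real mat" where
  "mderiv M t = mat (dim_row (M t)) (dim_col (M t)) (\<lambda>(i,j). Derivative.deriv (\<lambda>s. M s $$ (i,j)) t)"

definition dop :: "real mat \<Rightarrow> (real \<Rightarrow> real mat) \<Rightarrow> (real \<Rightarrow> real mat)" where
  "dop A M = (\<lambda>t. mderiv M t - A * M t)"

text \<open>calB(t) = [BL(t), (d/dt-A)(BL)(t), ..., (d/dt-A)^(r-1)(BL)(t)], an n x rm matrix.\<close>
definition calB :: "real mat \<Rightarrow> real mat \<Rightarrow> (real \<Rightarrow> real mat) \<Rightarrow> nat \<Rightarrow> real \<Rightarrow> real mat" where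
  "calB A B L r t = mat (dim_row B) (r * dim_col B)
     (\<lambda>(i,j). ((dop A ^^ (j div dim_col B)) (\<lambda>s. B * L s)) t $$ (i, j mod dim_col B))"

text \<open>calC = [C; CA; ...; CA^(r-1)], an rp x n matrix.\<close>
definition calC :: "real mat \<Rightarrow> real mat \<Rightarrow> nat \<Rightarrow> real mat" where
  "calC A C r = mat (r * dim_row C) (dim_col C)
     (\<lambda>(i,j). (C * (A ^\<^sub>m (i div dim_row C))) $$ (i mod dim_row C, j))"

definition calN :: "real mat \<Rightarrow> real mat \<Rightarrow> real mat \<Rightarrow> (real \<Rightarrow> real mat) \<Rightarrow> nat \<Rightarrow> real mat \<Rightarrow> real \<Rightarrow> real mat" where
  "calN A B C L r V t = pinv V * (1\<^sub>m (dim_row A) - calB A B L r t * pinv (calC A C r * calB A B L r t) * calC A C r)"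

definition calU :: "real mat \<Rightarrow> real mat \<Rightarrow> real mat \<Rightarrow> (real \<Rightarrow> real mat) \<Rightarrow> nat \<Rightarrow> real mat \<Rightarrow> real \<Rightarrow> real mat" where
  "calU A B C L r V t = calC A C r @\<^sub>r calN A B C L r V t"

end

theory Submission
  imports Defs
begin

lemma surj_right_inv:
  fixes M :: "real mat"
  assumes M: "M \<in> carrier_mat k l"
    and surj: "\<And>y. y \<in> carrier_vec k \<Longrightarrow> \<exists>x \<in> carrier_vec l. M *\<^sub>v x = y"
  shows "\<exists>R \<in> carrier_mat l k. M * R = 1\<^sub>m k"
proof -
  define g where "g j = (SOME x. x \<in> carrier_vec l \<and> M *\<^sub>v x = unit_vec k j)" for j
  have g: "g j \<in> carrier_vec l \<and> M *\<^sub>v g j = unit_vec k j" for j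
    unfolding g_def by (rule someI_ex) (use surj[of "unit_vec k j"] in auto)
  define R where "R = mat l k (\<lambda>(i,j). g j $ i)"
  have R: "R \<in> carrier_mat l k" unfolding R_def by simp
  have colR: "col R j = g j" if "j < k" for j
    using that g[of j] unfolding R_def by (auto simp: col_def)
  have "M * R = 1\<^sub>m k"
  proof (rule eq_matI)
    fix i j assume i: "i < dim_row (1\<^sub>m k)" and j: "j < dim_col (1\<^sub>m k)"
    have "(M * R) $$ (i,j) = row M i \<bullet> col R j" using i j M R by simp
    also have "\<dots> = (M *\<^sub>v g j) $ i" using i j M colR by simp
    also have "\<dots> = 1\<^sub>m k $$ (i,j)" using g[of j] i j by simp
    finally show "(M * R) $$ (i,j) = 1\<^sub>m k $$ (i,j)" .
  qed (use M R in auto)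
  with R show ?thesis by blast
qed

lemma surj_rank:
  fixes M :: "real mat"
  assumes M: "M \<in> carrier_mat k l"
    and surj: "\<And>y. y \<in> carrier_vec k \<Longrightarrow> \<exists>x \<in> carrier_vec l. M *\<^sub>v x = y"
  shows "rk M = k"
proof -
  interpret vec_space "TYPE(real)" k .
  have "span (set (cols M)) = {y\<in>carrier_vec (dim_row M). \<exists>x\<in>carrier_vec (dim_col M). M *\<^sub>v x = y}"
    using col_space_eq[OF M] unfolding col_space_def .
  also have "\<dots> = carrier_vec k" using M surj by auto
  finally have sp: "span (set (cols M)) = carrier_vec k" .
  have "rk M = rank M" unfolding rk_def using M by simp
  also have "\<dots> = dim"
  proof -
    have "vs (carrier_vec k) = V" unfolding module_vec_def by simp
    then show ?thesis unfolding rank_def sp by (simp only:)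
  qed
  also have "\<dots> = k" by (rule dim_is_n)
  finally show ?thesis .
qed

lemma rank_surj:
  fixes M :: "real mat"
  assumes M: "M \<in> carrier_mat k l" and r: "rk M = k" and y: "y \<in> carrier_vec k"
  shows "\<exists>x \<in> carrier_vec l. M *\<^sub>v x = y"
proof -
  interpret vec_space "TYPE(real)" k .
  obtain S where S: "maximal S (\<lambda>T. T \<subseteq> set (cols M) \<and> lin_indpt T)"
    using maximal_exists[of "(\<lambda>T. T \<subseteq> set (cols M) \<and> lin_indpt T)" "card (set (cols M))" "{}"]
    by (meson List.finite_set card_mono empty_iff empty_subsetI finite_lin_indpt2 rev_finite_subset)
  have cS: "card S = k" using rank_card_indpt[OF M S] r M unfolding rk_def by simp
  have Ssub: "S \<subseteq> set (cols M)" and li: "lin_indpt S" using S unfolding maximal_def by auto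
  have colsC: "set (cols M) \<subseteq> carrier_vec k" using M cols_dim by blast
  have SC: "S \<subseteq> carrier_vec k" using Ssub colsC by blast
  have fS: "finite S" using Ssub finite_subset by blast
  have "basis S" by (rule dim_li_is_basis) (use fS SC li cS dim_is_n in auto)
  then have spS: "span S = carrier_vec k" unfolding basis_def by simp
  have "span S \<subseteq> span (set (cols M))" by (rule span_is_monotone[OF Ssub])
  also have "span (set (cols M)) = {y\<in>carrier_vec (dim_row M). \<exists>x\<in>carrier_vec (dim_col M). M *\<^sub>v x = y}"
    using col_space_eq[OF M] unfolding col_space_def .
  finally show ?thesis using spS y M by auto
qed

definition penrose :: "real mat \<Rightarrow> real mat \<Rightarrow> bool" where
  "penrose M X \<longleftrightarrow> M * X * M = M \<and> X * M * X = X \<and>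
      transpose_mat (M * X) = M * X \<and> transpose_mat (X * M) = X * M"

lemma penrose_unique:
  fixes M X Y :: "real mat"
  assumes M: "M \<in> carrier_mat a b" and X: "X \<in> carrier_mat b a" and Y: "Y \<in> carrier_mat b a"
    and pX: "penrose M X" and pY: "penrose M Y"
  shows "X = Y"
proof -
  note tm = transpose_mult
  have X1: "M * X * M = M" and X2: "X * M * X = X" and X3: "transpose_mat (M * X) = M * X"
    and X4: "transpose_mat (X * M) = X * M" using pX unfolding penrose_def by auto
  have Y1: "M * Y * M = M" and Y2: "Y * M * Y = Y" and Y3: "transpose_mat (M * Y) = M * Y"
    and Y4: "transpose_mat (Y * M) = Y * M" using pY unfolding penrose_def by auto
  have MT: "transpose_mat M \<in> carrier_mat b a" using M by simp
  have XT: "transpose_mat X \<in> carrier_mat a b" using X by simp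
  have YT: "transpose_mat Y \<in> carrier_mat a b" using Y by simp
  have MX: "M * X \<in> carrier_mat a a" and MY: "M * Y \<in> carrier_mat a a"
    and XM: "X * M \<in> carrier_mat b b" and YM: "Y * M \<in> carrier_mat b b" using M X Y by auto
  have tMX: "transpose_mat (M * X) = transpose_mat X * transpose_mat M" by (rule tm[OF M X])
  have tMY: "transpose_mat (M * Y) = transpose_mat Y * transpose_mat M" by (rule tm[OF M Y])
  have tXM: "transpose_mat (X * M) = transpose_mat M * transpose_mat X" by (rule tm[OF X M])
  have tYM: "transpose_mat (Y * M) = transpose_mat M * transpose_mat Y" by (rule tm[OF Y M])
  have MYM: "transpose_mat M = transpose_mat M * (transpose_mat Y * transpose_mat M)"
  proof -
    have "transpose_mat M = transpose_mat ((M * Y) * M)" using Y1 by simp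
    also have "\<dots> = transpose_mat M * transpose_mat (M * Y)" using M Y by (intro tm) auto
    finally show ?thesis unfolding tMY .
  qed
  have MXM: "transpose_mat M = transpose_mat M * (transpose_mat X * transpose_mat M)"
  proof -
    have "transpose_mat M = transpose_mat ((M * X) * M)" using X1 by simp
    also have "\<dots> = transpose_mat M * transpose_mat (M * X)" using M X by (intro tm) auto
    finally show ?thesis unfolding tMX .
  qed
  have "X = X * (M * X)" using X2 M X by simp
  also have "\<dots> = X * (transpose_mat X * transpose_mat M)" using X3 tMX by simp
  also have "\<dots> = X * (transpose_mat X * (transpose_mat M * (transpose_mat Y * transpose_mat M)))"
    using MYM by simp
  also have "\<dots> = X * ((transpose_mat X * transpose_mat M) * (transpose_mat Y * transpose_mat M))"
    using assoc_mult_mat[OF XT MT mult_carrier_mat[OF YT MT]] by simp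
  also have "\<dots> = X * ((M * X) * (M * Y))" using X3 Y3 tMX tMY by simp
  also have "\<dots> = (X * (M * X)) * (M * Y)" by (rule assoc_mult_mat[OF X MX MY, symmetric])
  also have "X * (M * X) = X" using X2 assoc_mult_mat[OF X M X] by simp
  also have "X * (M * Y) = X * M * Y" by (rule assoc_mult_mat[OF X M Y, symmetric])
  finally have 1: "X = X * M * Y" .
  have "Y = (Y * M) * Y" using Y2 M Y by simp
  also have "\<dots> = (transpose_mat M * transpose_mat Y) * Y" using Y4 tYM by simp
  also have "\<dots> = ((transpose_mat M * (transpose_mat X * transpose_mat M)) * transpose_mat Y) * Y"
    using MXM by simp
  also have "\<dots> = ((transpose_mat M * transpose_mat X) * (transpose_mat M * transpose_mat Y)) * Y"
    using assoc_mult_mat[OF MT XT mult_carrier_mat[OF MT YT]]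
      assoc_mult_mat[OF MT mult_carrier_mat[OF XT MT] YT] assoc_mult_mat[OF XT MT YT] by simp
  also have "\<dots> = ((X * M) * (Y * M)) * Y" using X4 Y4 tXM tYM by simp
  also have "\<dots> = (X * M) * ((Y * M) * Y)" by (rule assoc_mult_mat[OF XM YM Y])
  also have "(Y * M) * Y = Y" using Y2 .
  finally have 2: "Y = X * M * Y" .
  from 1 2 show ?thesis by simp
qed


lemma pinv_eq:
  fixes M X :: "real mat"
  assumes M: "M \<in> carrier_mat a b" and X: "X \<in> carrier_mat b a" and pX: "penrose M X"
  shows "pinv M = X"
  unfolding pinv_def
proof (rule the_equality)
  show "X \<in> carrier_mat (dim_col M) (dim_row M) \<and> M * X * M = M \<and> X * M * X = X \<and>
      transpose_mat (M * X) = M * X \<and> transpose_mat (X * M) = X * M"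
    using X M pX unfolding penrose_def by auto
next
  fix Y assume "Y \<in> carrier_mat (dim_col M) (dim_row M) \<and> M * Y * M = M \<and> Y * M * Y = Y \<and>
      transpose_mat (M * Y) = M * Y \<and> transpose_mat (Y * M) = Y * M"
  then show "Y = X" using penrose_unique[OF M _ X _ pX, of Y] M unfolding penrose_def by auto
qed

lemma gram_inv:
  fixes W :: "real mat"
  assumes W: "W \<in> carrier_mat a b"
    and inj: "\<And>v. v \<in> carrier_vec b \<Longrightarrow> W *\<^sub>v v = 0\<^sub>v a \<Longrightarrow> v = 0\<^sub>v b"
  shows "\<exists>N \<in> carrier_mat b b. (transpose_mat W * W) * N = 1\<^sub>m b \<and> N * (transpose_mat W * W) = 1\<^sub>m b
      \<and> transpose_mat N = N"
proof -
  define G where "G = transpose_mat W * W"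
  have G: "G \<in> carrier_mat b b" unfolding G_def using W by simp
  have GT: "transpose_mat G = G" unfolding G_def using transpose_mult[of "transpose_mat W" b a W b] W by simp
  have "det G \<noteq> 0"
  proof
    assume "det G = 0"
    then obtain v where v: "v \<in> carrier_vec b" "v \<noteq> 0\<^sub>v b" "G *\<^sub>v v = 0\<^sub>v b"
      using det_0_iff_vec_prod_zero_field[OF G] by auto
    have Wv: "W *\<^sub>v v \<in> carrier_vec a" using W v by simp
    have "(W *\<^sub>v v) \<bullet> (W *\<^sub>v v) = (transpose_mat W *\<^sub>v (W *\<^sub>v v)) \<bullet> v"
      using transpose_vec_mult_scalar[OF W v(1) Wv] by simp
    also have "transpose_mat W *\<^sub>v (W *\<^sub>v v) = G *\<^sub>v v" unfolding G_def using W v by simp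
    finally have "(W *\<^sub>v v) \<bullet> (W *\<^sub>v v) = 0" using v by simp
    then have "(\<Sum>i<a. ((W *\<^sub>v v) $ i)^2) = 0" using Wv W
      unfolding scalar_prod_def by (simp add: power2_eq_square lessThan_atLeast0)
    then have "\<forall>i<a. ((W *\<^sub>v v) $ i)^2 = 0" by (subst (asm) sum_nonneg_eq_0_iff) auto
    then have "W *\<^sub>v v = 0\<^sub>v a" using Wv W by (intro eq_vecI) auto
    then show False using inj v by auto
  qed
  from det_non_zero_imp_unit[OF G this, of undefined]
  obtain N where N: "N \<in> carrier_mat b b" "N * G = 1\<^sub>m b" "G * N = 1\<^sub>m b"
    unfolding Units_def ring_mat_simps by auto
  have "transpose_mat N * G = 1\<^sub>m b"
    using arg_cong[OF N(3), of transpose_mat] transpose_mult[OF G N(1)] GT by simp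
  then have "transpose_mat N = N"
  proof -
    assume a: "transpose_mat N * G = 1\<^sub>m b"
    have NT: "transpose_mat N \<in> carrier_mat b b" using N(1) by simp
    have "transpose_mat N = transpose_mat N * (G * N)" using N(3) NT by simp
    also have "\<dots> = (transpose_mat N * G) * N" using assoc_mult_mat[OF NT G N(1)] by simp
    also have "\<dots> = N" using a N(1) by simp
    finally show ?thesis .
  qed
  with N show ?thesis unfolding G_def by blast
qed


lemma pinv_right:
  fixes M R :: "real mat"
  assumes M: "M \<in> carrier_mat k l" and R: "R \<in> carrier_mat l k" and MR: "M * R = 1\<^sub>m k"
  shows "pinv M \<in> carrier_mat l k \<and> M * pinv M = 1\<^sub>m k"
proof -
  have MT: "transpose_mat M \<in> carrier_mat l k" using M by simp
  have RT: "transpose_mat R \<in> carrier_mat k l" using R by simp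
  have RTMT: "transpose_mat R * transpose_mat M = 1\<^sub>m k"
    using transpose_mult[OF M R] MR by simp
  have inj: "v = 0\<^sub>v k" if v: "v \<in> carrier_vec k" and z: "transpose_mat M *\<^sub>v v = 0\<^sub>v l" for v
  proof -
    have "v = (transpose_mat R * transpose_mat M) *\<^sub>v v" using RTMT v by simp
    also have "\<dots> = transpose_mat R *\<^sub>v (transpose_mat M *\<^sub>v v)" using RT MT v by simp
    also have "\<dots> = transpose_mat R *\<^sub>v 0\<^sub>v l" using z by simp
    also have "\<dots> = 0\<^sub>v k" using RT by (intro eq_vecI) auto
    finally show ?thesis .
  qed
  obtain N where N: "N \<in> carrier_mat k k" and N1: "(M * transpose_mat M) * N = 1\<^sub>m k"
    and N2: "N * (M * transpose_mat M) = 1\<^sub>m k" and NT: "transpose_mat N = N"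
    using gram_inv[OF MT inj] by auto
  define X where "X = transpose_mat M * N"
  have X: "X \<in> carrier_mat l k" unfolding X_def using MT N by simp
  have "M * X = (M * transpose_mat M) * N" unfolding X_def by (rule assoc_mult_mat[OF M MT N, symmetric])
  then have MX: "M * X = 1\<^sub>m k" using N1 by simp
  have XM: "X * M \<in> carrier_mat l l" using X M by simp
  have "transpose_mat (X * M) = transpose_mat M * transpose_mat X" using transpose_mult[OF X M] .
  also have "transpose_mat X = transpose_mat N * M"
    unfolding X_def using transpose_mult[OF MT N] by simp
  also have "transpose_mat M * (transpose_mat N * M) = X * M"
    unfolding X_def NT using assoc_mult_mat[OF MT N M] by simp
  finally have tXM: "transpose_mat (X * M) = X * M" .
  have "penrose M X" unfolding penrose_def
  proof (intro conjI)
    show "M * X * M = M" using MX M by simp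
    show "X * M * X = X" using assoc_mult_mat[OF X M X] MX X by simp
    show "transpose_mat (M * X) = M * X" using MX by simp
    show "transpose_mat (X * M) = X * M" by (rule tXM)
  qed
  then have "pinv M = X" by (rule pinv_eq[OF M X])
  then show ?thesis using X MX by simp
qed

lemma pinv_left:
  fixes V :: "real mat"
  assumes V: "V \<in> carrier_mat a b"
    and inj: "\<And>v. v \<in> carrier_vec b \<Longrightarrow> V *\<^sub>v v = 0\<^sub>v a \<Longrightarrow> v = 0\<^sub>v b"
  shows "pinv V \<in> carrier_mat b a \<and> pinv V * V = 1\<^sub>m b"
proof -
  have VT: "transpose_mat V \<in> carrier_mat b a" using V by simp
  obtain N where N: "N \<in> carrier_mat b b" and N1: "(transpose_mat V * V) * N = 1\<^sub>m b"
    and N2: "N * (transpose_mat V * V) = 1\<^sub>m b" and NT: "transpose_mat N = N"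
    using gram_inv[OF V inj] by auto
  define X where "X = N * transpose_mat V"
  have X: "X \<in> carrier_mat b a" unfolding X_def using VT N by simp
  have "X * V = N * (transpose_mat V * V)" unfolding X_def by (rule assoc_mult_mat[OF N VT V])
  then have XV: "X * V = 1\<^sub>m b" using N2 by simp
  have "transpose_mat (V * X) = transpose_mat X * transpose_mat V" using transpose_mult[OF V X] .
  also have "transpose_mat X = transpose_mat (transpose_mat V) * transpose_mat N"
    unfolding X_def using transpose_mult[OF N VT] by simp
  also have "(transpose_mat (transpose_mat V) * transpose_mat N) * transpose_mat V = V * X"
    unfolding X_def NT using assoc_mult_mat[OF V N VT] by simp
  finally have tVX: "transpose_mat (V * X) = V * X" .
  have "penrose V X" unfolding penrose_def
  proof (intro conjI)
    show "V * X * V = V" using assoc_mult_mat[OF V X V] XV V by simp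
    show "X * V * X = X" using XV X by simp
    show "transpose_mat (V * X) = V * X" by (rule tVX)
    show "transpose_mat (X * V) = X * V" using XV by simp
  qed
  then have "pinv V = X" by (rule pinv_eq[OF V X])
  then show ?thesis using X XV by simp
qed


definition smooth :: "(real \<Rightarrow> real) \<Rightarrow> bool" where
  "smooth g \<longleftrightarrow> (\<forall>k t. ((Derivative.deriv ^^ k) g) differentiable (at t))"

lemma funpow_deriv_Suc: "(Derivative.deriv ^^ Suc k) g = Derivative.deriv ((Derivative.deriv ^^ k) g)"
  by simp

lemma smooth_deriv: "smooth g \<Longrightarrow> smooth (Derivative.deriv g)"
  unfolding smooth_def by (metis funpow_Suc_right o_apply)

lemma smooth_diffable: "smooth g \<Longrightarrow> g differentiable (at t)"
  unfolding smooth_def by (metis funpow_0)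

lemma deriv_of_diffable: "(g::real\<Rightarrow>real) differentiable (at t) \<Longrightarrow> DERIV g t :> Derivative.deriv g t"
  using DERIV_deriv_iff_real_differentiable by blast

lemma smooth_add_iter:
  assumes "smooth f" "smooth g"
  shows "(Derivative.deriv ^^ k) (\<lambda>s. f s + g s) = (\<lambda>s. (Derivative.deriv ^^ k) f s + (Derivative.deriv ^^ k) g s)"
proof (induction k)
  case 0 then show ?case by simp
next
  case (Suc k)
  have "(Derivative.deriv ^^ Suc k) (\<lambda>s. f s + g s) = Derivative.deriv (\<lambda>s. (Derivative.deriv ^^ k) f s + (Derivative.deriv ^^ k) g s)"
    using Suc by simp
  also have "\<dots> = (\<lambda>t. (Derivative.deriv ^^ Suc k) f t + (Derivative.deriv ^^ Suc k) g t)"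
  proof
    fix t
    have "DERIV (\<lambda>s. (Derivative.deriv ^^ k) f s + (Derivative.deriv ^^ k) g s) t :>
        Derivative.deriv ((Derivative.deriv ^^ k) f) t + Derivative.deriv ((Derivative.deriv ^^ k) g) t"
      using assms unfolding smooth_def by (intro DERIV_add deriv_of_diffable) auto
    then show "Derivative.deriv (\<lambda>s. (Derivative.deriv ^^ k) f s + (Derivative.deriv ^^ k) g s) t =
       (Derivative.deriv ^^ Suc k) f t + (Derivative.deriv ^^ Suc k) g t"
      by (simp add: DERIV_imp_deriv)
  qed
  finally show ?case .
qed

lemma smooth_add: "smooth f \<Longrightarrow> smooth g \<Longrightarrow> smooth (\<lambda>s. f s + g s)"
  unfolding smooth_def[of "\<lambda>s. f s + g s"] smooth_add_iter
  by (intro allI differentiable_add) (auto simp: smooth_def)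

lemma smooth_cmult_iter:
  assumes "smooth f"
  shows "(Derivative.deriv ^^ k) (\<lambda>s. c * f s) = (\<lambda>s. c * (Derivative.deriv ^^ k) f s)"
proof (induction k)
  case 0 then show ?case by simp
next
  case (Suc k)
  have "(Derivative.deriv ^^ Suc k) (\<lambda>s. c * f s) = Derivative.deriv (\<lambda>s. c * (Derivative.deriv ^^ k) f s)"
    using Suc by simp
  also have "\<dots> = (\<lambda>t. c * (Derivative.deriv ^^ Suc k) f t)"
  proof
    fix t
    have "DERIV (\<lambda>s. c * (Derivative.deriv ^^ k) f s) t :> c * Derivative.deriv ((Derivative.deriv ^^ k) f) t"
      using assms unfolding smooth_def by (intro DERIV_cmult deriv_of_diffable) auto
    then show "Derivative.deriv (\<lambda>s. c * (Derivative.deriv ^^ k) f s) t = c * (Derivative.deriv ^^ Suc k) f t"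
      by (simp add: DERIV_imp_deriv)
  qed
  finally show ?case .
qed

lemma smooth_cmult: "smooth f \<Longrightarrow> smooth (\<lambda>s. c * f s)"
  unfolding smooth_def[of "\<lambda>s. c * f s"] smooth_cmult_iter
  by (intro allI differentiable_mult differentiable_const) (auto simp: smooth_def)

lemma smooth_const: "smooth (\<lambda>s. c)"
proof -
  have "(Derivative.deriv ^^ Suc k) (\<lambda>s. c) = (\<lambda>s. 0)" for k
  proof (induction k)
    case 0 then show ?case by (auto intro!: DERIV_imp_deriv)
  next
    case (Suc k) then show ?case by (auto intro!: DERIV_imp_deriv)
  qed
  then have "(Derivative.deriv ^^ k) (\<lambda>s. c) differentiable (at t)" for k t
    by (cases k) auto
  then show ?thesis unfolding smooth_def by auto
qed

lemma smooth_sum: "finite S \<Longrightarrow> (\<And>l. l \<in> S \<Longrightarrow> smooth (f l)) \<Longrightarrow> smooth (\<lambda>s. \<Sum>l\<in>S. f l s)"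
proof (induction S rule: finite_induct)
  case empty then show ?case using smooth_const[of 0] by simp
next
  case (insert x F) then show ?case using smooth_add[of "f x" "\<lambda>s. \<Sum>l\<in>F. f l s"] by simp
qed

lemma smooth_diff: "smooth f \<Longrightarrow> smooth g \<Longrightarrow> smooth (\<lambda>s. f s - g s)"
  using smooth_add[of f "\<lambda>s. (-1) * g s"] smooth_cmult[of g "-1"] by simp

lemma deriv_lincomb:
  fixes f :: "'b \<Rightarrow> real \<Rightarrow> real"
  assumes "finite S" "\<And>l. l \<in> S \<Longrightarrow> f l differentiable (at t)"
  shows "Derivative.deriv (\<lambda>s. \<Sum>l\<in>S. c l * f l s) t = (\<Sum>l\<in>S. c l * Derivative.deriv (f l) t)"
proof -
  have 1: "DERIV (f l) t :> Derivative.deriv (f l) t" if "l \<in> S" for l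
    using assms(2)[OF that] by (rule deriv_of_diffable)
  have 2: "DERIV (\<lambda>s. c l * f l s) t :> c l * Derivative.deriv (f l) t" if "l \<in> S" for l
    using DERIV_cmult[OF 1[OF that]] .
  have "DERIV (\<lambda>s. \<Sum>l\<in>S. c l * f l s) t :> (\<Sum>l\<in>S. c l * Derivative.deriv (f l) t)"
    using DERIV_sum[of S "\<lambda>s l. c l * f l s" "\<lambda>l. c l * Derivative.deriv (f l) t" "at t"] 2 by blast
  then show ?thesis by (rule DERIV_imp_deriv)
qed


lemma mult_entry:
  fixes X Y :: "real mat"
  assumes "X \<in> carrier_mat a k" "Y \<in> carrier_mat k b" "i < a" "j < b"
  shows "(X * Y) $$ (i,j) = (\<Sum>l\<in>{0..<k}. X $$ (i,l) * Y $$ (l,j))"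
  using assms by (simp add: scalar_prod_def)

locale sysl =
  fixes n m p r :: nat and A B C :: "real mat" and L :: "real \<Rightarrow> real mat"
  assumes A: "A \<in> carrier_mat n n" and B: "B \<in> carrier_mat n m" and C: "C \<in> carrier_mat p n"
    and L_dim: "\<And>t. L t \<in> carrier_mat m m"
    and L_smooth: "\<And>i j k t. i < m \<Longrightarrow> j < m \<Longrightarrow>
        ((Derivative.deriv ^^ k) (\<lambda>s. L s $$ (i,j))) differentiable (at t)"
    and P2_BL: "\<And>k t. k + 2 \<le> r \<Longrightarrow> C * (A ^\<^sub>m k) * B * L t = 0\<^sub>m p m"
begin

definition D :: "nat \<Rightarrow> real \<Rightarrow> real mat" where
  "D j = (dop A ^^ j) (\<lambda>s. B * L s)"

lemma D_0: "D 0 t = B * L t" unfolding D_def by simp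

lemma D_Suc: "D (Suc j) t = mderiv (D j) t - A * D j t"
  unfolding D_def by (simp add: dop_def)

lemma D_carrier: "D j t \<in> carrier_mat n m"
proof (induction j arbitrary: t)
  case 0 then show ?case using B L_dim by (simp add: D_0)
next
  case (Suc j)
  have "mderiv (D j) t \<in> carrier_mat n m" using Suc[of t] unfolding mderiv_def by auto
  then show ?case unfolding D_Suc using A Suc[of t] by auto
qed

lemma mderiv_D_entry: "i < n \<Longrightarrow> b < m \<Longrightarrow> mderiv (D j) t $$ (i,b) = Derivative.deriv (\<lambda>s. D j s $$ (i,b)) t"
  using D_carrier[of j t] unfolding mderiv_def by auto

lemma D_Suc_entry:
  assumes "i < n" "b < m"
  shows "D (Suc j) t $$ (i,b) = Derivative.deriv (\<lambda>s. D j s $$ (i,b)) t - (\<Sum>l\<in>{0..<n}. A $$ (i,l) * D j t $$ (l,b))"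
proof -
  have "(A * D j t) $$ (i,b) = (\<Sum>l\<in>{0..<n}. A $$ (i,l) * D j t $$ (l,b))"
    using assms A D_carrier[of j t] by (simp add: scalar_prod_def)
  moreover have "mderiv (D j) t \<in> carrier_mat n m" using D_carrier[of j t] unfolding mderiv_def by auto
  ultimately show ?thesis unfolding D_Suc using assms A D_carrier[of j t] mderiv_D_entry by simp
qed

lemma D_smooth: "i < n \<Longrightarrow> b < m \<Longrightarrow> smooth (\<lambda>s. D j s $$ (i,b))"
proof (induction j arbitrary: i b)
  case 0
  have "(\<lambda>s. D 0 s $$ (i,b)) = (\<lambda>s. \<Sum>l\<in>{0..<m}. B $$ (i,l) * L s $$ (l,b))"
    using 0 B L_dim by (intro ext) (simp add: D_0 mult_entry[OF B L_dim])
  moreover have "smooth (\<lambda>s. \<Sum>l\<in>{0..<m}. B $$ (i,l) * L s $$ (l,b))"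
    using 0 L_smooth by (intro smooth_sum smooth_cmult) (auto simp: smooth_def)
  ultimately show ?case by simp
next
  case (Suc j)
  have "(\<lambda>s. D (Suc j) s $$ (i,b)) = (\<lambda>s. Derivative.deriv (\<lambda>s. D j s $$ (i,b)) s - (\<Sum>l\<in>{0..<n}. A $$ (i,l) * D j s $$ (l,b)))"
    using D_Suc_entry Suc.prems by auto
  moreover have "smooth (\<lambda>s. Derivative.deriv (\<lambda>s. D j s $$ (i,b)) s - (\<Sum>l\<in>{0..<n}. A $$ (i,l) * D j s $$ (l,b)))"
    using Suc by (intro smooth_diff smooth_deriv smooth_sum smooth_cmult) auto
  ultimately show ?case by simp
qed

lemma mderiv_zero:
  assumes K: "K \<in> carrier_mat p n" and z: "\<And>s. K * D j s = 0\<^sub>m p m"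
  shows "K * mderiv (D j) t = 0\<^sub>m p m"
proof -
  have MD: "mderiv (D j) t \<in> carrier_mat n m" using D_carrier[of j t] unfolding mderiv_def by auto
  show ?thesis
  proof (rule eq_matI)
    fix a b assume a: "a < dim_row (0\<^sub>m p m)" and b: "b < dim_col (0\<^sub>m p m)"
    have "(K * mderiv (D j) t) $$ (a,b) = (\<Sum>l\<in>{0..<n}. K $$ (a,l) * Derivative.deriv (\<lambda>s. D j s $$ (l,b)) t)"
      using a b K MD mderiv_D_entry by (simp add: scalar_prod_def)
    also have "\<dots> = Derivative.deriv (\<lambda>s. \<Sum>l\<in>{0..<n}. K $$ (a,l) * D j s $$ (l,b)) t"
      using b by (intro deriv_lincomb[symmetric] smooth_diffable D_smooth) auto
    also have "(\<lambda>s. \<Sum>l\<in>{0..<n}. K $$ (a,l) * D j s $$ (l,b)) = (\<lambda>s. (K * D j s) $$ (a,b))"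
      using a b K D_carrier by (intro ext) (simp add: mult_entry[OF K D_carrier])
    also have "\<dots> = (\<lambda>s. 0)" using z a b by simp
    finally show "(K * mderiv (D j) t) $$ (a,b) = 0\<^sub>m p m $$ (a,b)" using a b by simp
  qed (use K MD in auto)
qed

definition Gam :: "real \<Rightarrow> real mat" where
  "Gam t = C * (A ^\<^sub>m (r - 1)) * B * L t"

lemma Gam_carrier: "Gam t \<in> carrier_mat p m"
  unfolding Gam_def using A B C L_dim[of t] by (intro mult_carrier_mat pow_carrier_mat) auto

lemma CAD:
  "(k + j + 2 \<le> r \<longrightarrow> C * (A ^\<^sub>m k) * D j t = 0\<^sub>m p m) \<and>
   (k + j + 1 = r \<longrightarrow> C * (A ^\<^sub>m k) * D j t = ((-1) ^ j) \<cdot>\<^sub>m Gam t)"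
proof (induction j arbitrary: k t)
  case 0
  have CAk: "C * (A ^\<^sub>m k) \<in> carrier_mat p n" using A C by auto
  have eq: "C * (A ^\<^sub>m k) * D 0 t = C * (A ^\<^sub>m k) * B * L t"
    unfolding D_0 using assoc_mult_mat[OF CAk B L_dim[of t]] by simp
  show ?case
  proof (intro conjI impI)
    assume "k + 0 + 2 \<le> r" then show "C * (A ^\<^sub>m k) * D 0 t = 0\<^sub>m p m" using eq P2_BL by simp
  next
    assume "k + 0 + 1 = r"
    then have "k = r - 1" by simp
    then show "C * (A ^\<^sub>m k) * D 0 t = (-1) ^ 0 \<cdot>\<^sub>m Gam t" using eq Gam_carrier[of t]
      unfolding Gam_def by (auto intro!: eq_matI)
  qed
next
  case (Suc j)
  have CAk: "C * (A ^\<^sub>m k) \<in> carrier_mat p n" using A C by auto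
  have MD: "mderiv (D j) t \<in> carrier_mat n m" using D_carrier[of j t] unfolding mderiv_def by auto
  have ADj: "A * D j t \<in> carrier_mat n m" using A D_carrier by auto
  have "C * (A ^\<^sub>m k) * D (Suc j) t = C * (A ^\<^sub>m k) * mderiv (D j) t - C * (A ^\<^sub>m k) * (A * D j t)"
    unfolding D_Suc by (rule mult_minus_distrib_mat[OF CAk MD ADj])
  also have "C * (A ^\<^sub>m k) * (A * D j t) = C * (A ^\<^sub>m Suc k) * D j t"
    using assoc_mult_mat[OF CAk A D_carrier[of j t]] assoc_mult_mat[OF C pow_carrier_mat[OF A] A] by simp
  finally have eq: "C * (A ^\<^sub>m k) * D (Suc j) t = C * (A ^\<^sub>m k) * mderiv (D j) t - C * (A ^\<^sub>m Suc k) * D j t" .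
  have G: "Gam t \<in> carrier_mat p m" by (rule Gam_carrier)
  show ?case
  proof (intro conjI impI)
    assume h: "k + Suc j + 2 \<le> r"
    have 1: "C * (A ^\<^sub>m k) * mderiv (D j) t = 0\<^sub>m p m"
      by (rule mderiv_zero[OF CAk]) (use Suc.IH[of k] h in auto)
    have 2: "C * (A ^\<^sub>m Suc k) * D j t = 0\<^sub>m p m" using Suc.IH[of "Suc k" t] h by auto
    show "C * (A ^\<^sub>m k) * D (Suc j) t = 0\<^sub>m p m" unfolding eq 1 2 by (auto intro!: eq_matI)
  next
    assume h: "k + Suc j + 1 = r"
    have 1: "C * (A ^\<^sub>m k) * mderiv (D j) t = 0\<^sub>m p m"
      by (rule mderiv_zero[OF CAk]) (use Suc.IH[of k] h in auto)
    have 2: "C * (A ^\<^sub>m Suc k) * D j t = (-1) ^ j \<cdot>\<^sub>m Gam t" using Suc.IH[of "Suc k" t] h by auto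
    show "C * (A ^\<^sub>m k) * D (Suc j) t = (-1) ^ Suc j \<cdot>\<^sub>m Gam t" unfolding eq 1 2
      using G by (auto intro!: eq_matI)
  qed
qed

end


lemma idx_less: "i < (r::nat) \<Longrightarrow> a < p \<Longrightarrow> i * p + a < r * p"
proof -
  assume "i < r" "a < p"
  then have "i * p + a < Suc i * p" by simp
  also have "\<dots> \<le> r * p" using \<open>i < r\<close> by (intro mult_le_mono1) simp
  finally show ?thesis .
qed

lemma sum_block:
  fixes g h :: "nat \<Rightarrow> real"
  assumes jj: "jj < r"
  shows "(\<Sum>c\<in>{0..<r*m}. g c * (if c div m = jj then h (c mod m) else 0)) = (\<Sum>b\<in>{0..<m}. g (jj*m+b) * h b)"
proof -
  let ?S = "(\<lambda>b. jj*m+b) ` {0..<m}"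
  have inj: "inj_on (\<lambda>b. jj*m+b) {0..<m}" by (auto simp: inj_on_def)
  have "(\<Sum>b\<in>{0..<m}. g (jj*m+b) * h b) = (\<Sum>b\<in>{0..<m}. g (jj*m+b) * h ((jj*m+b) mod m))"
    by (intro sum.cong) auto
  also have "\<dots> = (\<Sum>c\<in>?S. g c * h (c mod m))"
    using sum.reindex[OF inj, of "\<lambda>c. g c * h (c mod m)"] by simp
  finally have R: "(\<Sum>b\<in>{0..<m}. g (jj*m+b) * h b) = (\<Sum>c\<in>?S. g c * h (c mod m))" .
  have sub: "?S \<subseteq> {0..<r*m}"
  proof
    fix c assume "c \<in> ?S"
    then obtain b where "b \<in> {0..<m}" "c = jj*m+b" by blast
    then show "c \<in> {0..<r*m}" using idx_less[OF jj, of b m] by auto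
  qed
  have "(\<Sum>c\<in>{0..<r*m}. g c * (if c div m = jj then h (c mod m) else 0)) = (\<Sum>c\<in>?S. g c * h (c mod m))"
  proof (rule sum.mono_neutral_cong_right[OF _ sub])
    show "\<forall>c\<in>{0..<r*m} - ?S. g c * (if c div m = jj then h (c mod m) else 0) = 0"
    proof
      fix c assume c: "c \<in> {0..<r*m} - ?S"
      show "g c * (if c div m = jj then h (c mod m) else 0) = 0"
      proof (cases "c div m = jj")
        case True
        then have "c = jj*m + c mod m" by (metis div_mult_mod_eq mult.commute)
        moreover have "c mod m < m" using c by (cases "m = 0") auto
        ultimately have "c \<in> ?S" by (metis atLeastLessThan_iff image_eqI zero_le)
        with c show ?thesis by auto
      qed auto
    qed
    show "g c * (if c div m = jj then h (c mod m) else 0) = g c * h (c mod m)" if "c \<in> ?S" for c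
    proof -
      obtain b where "b \<in> {0..<m}" "c = jj*m+b" using \<open>c \<in> ?S\<close> by blast
      then have "c div m = jj" by simp
      then show ?thesis by simp
    qed
  qed auto
  with R show ?thesis by simp
qed

lemma mat_vec_entry:
  fixes X :: "real mat"
  assumes "X \<in> carrier_mat a b" "w \<in> carrier_vec b" "i < a"
  shows "(X *\<^sub>v w) $ i = (\<Sum>l\<in>{0..<b}. X $$ (i,l) * w $ l)"
  using assms by (simp add: scalar_prod_def)

context sysl
begin

definition MM :: "real \<Rightarrow> real mat" where
  "MM t = calC A C r * calB A B L r t"

lemma calB_carrier: "calB A B L r t \<in> carrier_mat n (r*m)"
  unfolding calB_def using B by auto

lemma calC_carrier: "calC A C r \<in> carrier_mat (r*p) n"
  unfolding calC_def using C by auto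

lemma MM_carrier: "MM t \<in> carrier_mat (r*p) (r*m)"
  unfolding MM_def using calB_carrier calC_carrier by auto

lemma calB_entry: "k < n \<Longrightarrow> j < r \<Longrightarrow> b < m \<Longrightarrow> calB A B L r t $$ (k, j*m+b) = D j t $$ (k,b)"
  unfolding calB_def D_def using B idx_less[of j r b m] by auto

lemma calC_entry: "i < r \<Longrightarrow> a < p \<Longrightarrow> k < n \<Longrightarrow> calC A C r $$ (i*p+a, k) = (C * A ^\<^sub>m i) $$ (a,k)"
  unfolding calC_def using C idx_less[of i r a p] by auto

lemma MM_entry:
  assumes i: "i < r" and a: "a < p" and j: "j < r" and b: "b < m"
  shows "MM t $$ (i*p+a, j*m+b) = (C * A ^\<^sub>m i * D j t) $$ (a,b)"
proof -
  have CA: "C * A ^\<^sub>m i \<in> carrier_mat p n" using A C by auto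
  have "MM t $$ (i*p+a, j*m+b) = (\<Sum>l\<in>{0..<n}. calC A C r $$ (i*p+a, l) * calB A B L r t $$ (l, j*m+b))"
    unfolding MM_def by (rule mult_entry[OF calC_carrier calB_carrier idx_less[OF i a] idx_less[OF j b]])
  also have "\<dots> = (\<Sum>l\<in>{0..<n}. (C * A ^\<^sub>m i) $$ (a,l) * D j t $$ (l,b))"
    using calB_entry calC_entry i a j b by (intro sum.cong) auto
  also have "\<dots> = (C * A ^\<^sub>m i * D j t) $$ (a,b)"
    by (rule mult_entry[OF CA D_carrier a b, symmetric])
  finally show ?thesis .
qed

lemma MM_block_vec:
  assumes jj: "jj < r" and w: "w \<in> carrier_vec m" and i: "i < r" and a: "a < p"
  shows "(MM t *\<^sub>v vec (r*m) (\<lambda>c. if c div m = jj then w $ (c mod m) else 0)) $ (i*p+a)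
       = ((C * A ^\<^sub>m i * D jj t) *\<^sub>v w) $ a"
proof -
  have CAD: "C * A ^\<^sub>m i * D jj t \<in> carrier_mat p m"
    using A C D_carrier[of jj t] by (intro mult_carrier_mat pow_carrier_mat) auto
  have "(MM t *\<^sub>v vec (r*m) (\<lambda>c. if c div m = jj then w $ (c mod m) else 0)) $ (i*p+a)
     = (\<Sum>c\<in>{0..<r*m}. MM t $$ (i*p+a, c) * (if c div m = jj then w $ (c mod m) else 0))"
    using MM_carrier[of t] idx_less[OF i a] by (simp add: scalar_prod_def)
  also have "\<dots> = (\<Sum>b\<in>{0..<m}. MM t $$ (i*p+a, jj*m+b) * w $ b)"
    by (rule sum_block[OF jj])
  also have "\<dots> = (\<Sum>b\<in>{0..<m}. (C * A ^\<^sub>m i * D jj t) $$ (a,b) * w $ b)"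
    using MM_entry[OF i a jj] by simp
  also have "\<dots> = ((C * A ^\<^sub>m i * D jj t) *\<^sub>v w) $ a"
    by (rule mat_vec_entry[OF CAD w a, symmetric])
  finally show ?thesis .
qed

end

lemma smult_mat_vec_entry:
  fixes G :: "real mat"
  assumes G: "G \<in> carrier_mat a b" and w: "w \<in> carrier_vec b" and i: "i < a"
  shows "((c \<cdot>\<^sub>m G) *\<^sub>v w) $ i = c * (G *\<^sub>v w) $ i"
proof -
  have cG: "c \<cdot>\<^sub>m G \<in> carrier_mat a b" using G by simp
  have "((c \<cdot>\<^sub>m G) *\<^sub>v w) $ i = (\<Sum>l\<in>{0..<b}. (c \<cdot>\<^sub>m G) $$ (i,l) * w $ l)"
    by (rule mat_vec_entry[OF cG w i])
  also have "\<dots> = (\<Sum>l\<in>{0..<b}. c * (G $$ (i,l) * w $ l))"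
    using G i by (intro sum.cong) auto
  also have "\<dots> = c * (\<Sum>l\<in>{0..<b}. G $$ (i,l) * w $ l)" by (simp add: sum_distrib_left)
  also have "\<dots> = c * (G *\<^sub>v w) $ i" using mat_vec_entry[OF G w i] by simp
  finally show ?thesis .
qed

context sysl
begin

lemma MM_surj:
  assumes rkG: "rk (Gam t) = p" and y: "y \<in> carrier_vec (r*p)"
  shows "\<exists>x\<in>carrier_vec (r*m). MM t *\<^sub>v x = y"
proof -
  have MMc: "MM t \<in> carrier_mat (r*p) (r*m)" by (rule MM_carrier)
  have main: "\<forall>y\<in>carrier_vec (r*p). (\<forall>l<(r-i)*p. y $ l = 0) \<longrightarrow> (\<exists>x\<in>carrier_vec (r*m). MM t *\<^sub>v x = y)"
    if "i \<le> r" for i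
    using that
  proof (induction i)
    case 0
    show ?case
    proof (intro ballI impI)
      fix y :: "real vec" assume y: "y \<in> carrier_vec (r*p)" and z: "\<forall>l<(r-0)*p. y $ l = 0"
      have "y = 0\<^sub>v (r*p)" using y z by (intro eq_vecI) auto
      moreover have "MM t *\<^sub>v 0\<^sub>v (r*m) = 0\<^sub>v (r*p)" using MMc by auto
      ultimately have "MM t *\<^sub>v 0\<^sub>v (r*m) = y" by simp
      then show "\<exists>x\<in>carrier_vec (r*m). MM t *\<^sub>v x = y" by (intro bexI[of _ "0\<^sub>v (r*m)"]) auto
    qed
  next
    case (Suc i)
    define bi where "bi = r - Suc i"
    have bi: "bi + i + 1 = r" using Suc.prems unfolding bi_def by simp
    have ir: "i < r" using Suc.prems by simp
    show ?case
    proof (intro ballI impI)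
      fix y :: "real vec" assume y: "y \<in> carrier_vec (r*p)" and z: "\<forall>l<(r - Suc i)*p. y $ l = 0"
      define zz where "zz = vec p (\<lambda>a. y $ (bi*p+a))"
      have zzc: "(-1)^i \<cdot>\<^sub>v zz \<in> carrier_vec p" unfolding zz_def by simp
      obtain w where w: "w \<in> carrier_vec m" and Gw: "Gam t *\<^sub>v w = (-1)^i \<cdot>\<^sub>v zz"
        using rank_surj[OF Gam_carrier rkG zzc] by blast
      define x0 where "x0 = vec (r*m) (\<lambda>c. if c div m = i then w $ (c mod m) else 0)"
      have x0c: "x0 \<in> carrier_vec (r*m)" unfolding x0_def by simp
      define y' where "y' = y - MM t *\<^sub>v x0"
      have y'c: "y' \<in> carrier_vec (r*p)" unfolding y'_def using y MMc x0c by auto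
      have y'z: "\<forall>l<(r - i)*p. y' $ l = 0"
      proof (intro allI impI)
        fix l assume l: "l < (r - i) * p"
        then have p0: "p > 0" by (cases p) auto
        define i' where "i' = l div p"
        define a where "a = l mod p"
        have la: "l = i'*p + a" unfolding i'_def a_def by simp
        have a: "a < p" unfolding a_def using p0 by simp
        have "i'*p \<le> l" unfolding la by simp
        then have "i'*p < (r - i) * p" using l by linarith
        then have "i' < r - i" using mult_less_cancel2 by blast
        then have i'bi: "i' \<le> bi" unfolding bi_def by simp
        have i'r: "i' < r" using i'bi bi by simp
        have lr: "l < r*p" using la idx_less[OF i'r a] by simp
        have Ml: "(MM t *\<^sub>v x0) $ l = ((C * A ^\<^sub>m i' * D i t) *\<^sub>v w) $ a"
          unfolding x0_def la by (rule MM_block_vec[OF ir w i'r a])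
        have "y' $ l = y $ l - (MM t *\<^sub>v x0) $ l" unfolding y'_def using y MMc lr by simp
        also have "\<dots> = 0"
        proof (cases "i' < bi")
          case True
          have "l < (r - Suc i) * p" using la idx_less[OF True a] unfolding bi_def by simp
          then have "y $ l = 0" using z by simp
          moreover have "C * A ^\<^sub>m i' * D i t = 0\<^sub>m p m" using CAD[of i' i t] True bi by simp
          ultimately show ?thesis using Ml w a by simp
        next
          case False
          then have ii: "i' = bi" using i'bi by simp
          have sq: "(-1::real)^i * (-1)^i = 1" by (simp flip: power_add)
          have "C * A ^\<^sub>m i' * D i t = (-1)^i \<cdot>\<^sub>m Gam t" using CAD[of i' i t] ii bi by simp
          then have "(MM t *\<^sub>v x0) $ l = (((-1)^i \<cdot>\<^sub>m Gam t) *\<^sub>v w) $ a" using Ml by simp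
          also have "\<dots> = (-1)^i * (Gam t *\<^sub>v w) $ a"
            by (rule smult_mat_vec_entry[OF Gam_carrier w a])
          also have "\<dots> = (-1)^i * ((-1)^i * zz $ a)" using Gw a by (simp add: zz_def)
          also have "\<dots> = ((-1)^i * (-1)^i) * zz $ a" by (rule mult.assoc[symmetric])
          also have "\<dots> = zz $ a" using sq by simp
          also have "\<dots> = y $ l" unfolding zz_def using a la ii by simp
          finally show ?thesis by simp
        qed
        finally show "y' $ l = 0" .
      qed
      obtain x' where x': "x' \<in> carrier_vec (r*m)" and Mx': "MM t *\<^sub>v x' = y'"
        using Suc.IH[OF Suc_leD[OF Suc.prems]] y'c y'z by blast
      have "MM t *\<^sub>v (x' + x0) = MM t *\<^sub>v x' + MM t *\<^sub>v x0"
        by (rule mult_add_distrib_mat_vec[OF MMc x' x0c])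
      also have "\<dots> = y" unfolding Mx' y'_def using y MMc x0c by (intro eq_vecI) auto
      finally show "\<exists>x\<in>carrier_vec (r*m). MM t *\<^sub>v x = y" using x' x0c by (intro bexI[of _ "x' + x0"]) auto
    qed
  qed
  show ?thesis using main[of r] y by simp
qed

end

lemma hcat_carrier: "X \<in> carrier_mat n k \<Longrightarrow> V \<in> carrier_mat n d \<Longrightarrow> hcat X V \<in> carrier_mat n (k + d)"
proof -
  assume X: "X \<in> carrier_mat n k" and V: "V \<in> carrier_mat n d"
  have "four_block_mat X V (0\<^sub>m 0 (dim_col X)) (0\<^sub>m 0 (dim_col V)) \<in> carrier_mat (n + 0) (k + d)"
    by (rule four_block_carrier_mat) (use X V in auto)
  then show ?thesis unfolding hcat_def by simp
qed

lemma hcat_mult_vec: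
  assumes X: "X \<in> carrier_mat n k" and V: "V \<in> carrier_mat n d"
    and a: "a \<in> carrier_vec k" and b: "b \<in> carrier_vec d"
  shows "hcat X V *\<^sub>v (a @\<^sub>v b) = X *\<^sub>v a + V *\<^sub>v b"
proof (rule eq_vecI)
  have H: "hcat X V \<in> carrier_mat n (k + d)" by (rule hcat_carrier[OF X V])
  fix i assume "i < dim_vec (X *\<^sub>v a + V *\<^sub>v b)"
  then have i: "i < n" using X V by simp
  have "(hcat X V *\<^sub>v (a @\<^sub>v b)) $ i = row (hcat X V) i \<bullet> (a @\<^sub>v b)" using H i by simp
  also have "row (hcat X V) i = row X i @\<^sub>v row V i"
  proof -
    have hc: "hcat X V = four_block_mat X V (0\<^sub>m 0 k) (0\<^sub>m 0 d)" unfolding hcat_def using X V by simp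
    show ?thesis unfolding hc by (rule row_four_block_mat(1)[OF X V zero_carrier_mat zero_carrier_mat i])
  qed
  also have "(row X i @\<^sub>v row V i) \<bullet> (a @\<^sub>v b) = row X i \<bullet> a + row V i \<bullet> b"
    by (rule scalar_prod_append) (use X V a b in auto)
  also have "\<dots> = (X *\<^sub>v a + V *\<^sub>v b) $ i" using X V i by simp
  finally show "(hcat X V *\<^sub>v (a @\<^sub>v b)) $ i = (X *\<^sub>v a + V *\<^sub>v b) $ i" .
qed (use X V hcat_carrier[OF X V] in auto)

lemma mat_unit_entry:
  fixes Y :: "real mat"
  assumes "Y \<in> carrier_mat a d" "i < a" "j < d"
  shows "(Y *\<^sub>v unit_vec d j) $ i = Y $$ (i,j)"
proof -
  have "(Y *\<^sub>v unit_vec d j) $ i = (\<Sum>l\<in>{0..<d}. Y $$ (i,l) * unit_vec d j $ l)"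
    by (rule mat_vec_entry) (use assms in auto)
  also have "\<dots> = (\<Sum>l\<in>{0..<d}. if l = j then Y $$ (i,l) else 0)"
    by (intro sum.cong) (auto simp: unit_vec_def)
  also have "\<dots> = Y $$ (i,j)" using assms by simp
  finally show ?thesis .
qed

lemma U_part:
  fixes Cc Bb R V :: "real mat"
  assumes Cc: "Cc \<in> carrier_mat k n" and Bb: "Bb \<in> carrier_mat n l" and R: "R \<in> carrier_mat l k"
    and CBR: "Cc * Bb * R = 1\<^sub>m k" and V: "V \<in> carrier_mat n (n - k)"
    and Vim: "mat_image V = mat_kernel Cc" and kn: "k \<le> n"
  defines "U \<equiv> Cc @\<^sub>r (pinv V * (1\<^sub>m n - Bb * pinv (Cc * Bb) * Cc))"
  defines "W \<equiv> hcat (Bb * pinv (Cc * Bb)) V"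
  shows "U \<in> carrier_mat n n \<and> invertible_mat U \<and> U * W = 1\<^sub>m n \<and> W * U = 1\<^sub>m n"
proof -
  define d where "d = n - k"
  have nkd: "n = k + d" unfolding d_def using kn by simp
  have V': "V \<in> carrier_mat n d" using V unfolding d_def .
  define M where "M = Cc * Bb"
  have M: "M \<in> carrier_mat k l" unfolding M_def using Cc Bb by simp
  have MR: "M * R = 1\<^sub>m k" unfolding M_def using CBR .
  obtain X0: "pinv M \<in> carrier_mat l k" and MX0: "M * pinv M = 1\<^sub>m k"
    using pinv_right[OF M R MR] by blast
  define X where "X = Bb * pinv M"
  have X: "X \<in> carrier_mat n k" unfolding X_def using Bb X0 by simp
  have CX: "Cc * X = 1\<^sub>m k" unfolding X_def using assoc_mult_mat[OF Cc Bb X0] MX0 unfolding M_def by simp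
  have CVx: "Cc *\<^sub>v (V *\<^sub>v x) = 0\<^sub>v k" if x: "x \<in> carrier_vec d" for x
  proof -
    have "V *\<^sub>v x \<in> mat_image V" unfolding mat_image_def using x V' by auto
    then show ?thesis using Vim mat_kernelD(2)[OF Cc] by auto
  qed
  have CV: "Cc * V = 0\<^sub>m k d"
  proof (rule eq_matI)
    fix i j assume i: "i < dim_row (0\<^sub>m k d)" and j: "j < dim_col (0\<^sub>m k d)"
    have CVc: "Cc * V \<in> carrier_mat k d" using Cc V' by simp
    have "(Cc * V) $$ (i,j) = ((Cc * V) *\<^sub>v unit_vec d j) $ i"
      using mat_unit_entry[OF CVc] i j by simp
    also have "\<dots> = (Cc *\<^sub>v (V *\<^sub>v unit_vec d j)) $ i" using Cc V' by simp
    also have "\<dots> = 0" using CVx[of "unit_vec d j"] i by simp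
    finally show "(Cc * V) $$ (i,j) = 0\<^sub>m k d $$ (i,j)" using i j by simp
  qed (use Cc V' in auto)
  define W0 where "W0 = hcat X V"
  have W0: "W0 \<in> carrier_mat n n" unfolding W0_def using hcat_carrier[OF X V'] nkd by simp
  have W0surj: "\<exists>v\<in>carrier_vec n. W0 *\<^sub>v v = z" if z: "z \<in> carrier_vec n" for z
  proof -
    define u where "u = z - X *\<^sub>v (Cc *\<^sub>v z)"
    have Cz: "Cc *\<^sub>v z \<in> carrier_vec k" using Cc z by simp
    have u: "u \<in> carrier_vec n" unfolding u_def using X Cz z by simp
    have "Cc *\<^sub>v u = Cc *\<^sub>v z - Cc *\<^sub>v (X *\<^sub>v (Cc *\<^sub>v z))"
      unfolding u_def using Cc X Cz z by (simp add: mult_minus_distrib_mat_vec)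
    also have "Cc *\<^sub>v (X *\<^sub>v (Cc *\<^sub>v z)) = Cc *\<^sub>v z"
      using assoc_mult_mat_vec[OF Cc X Cz] CX Cz by simp
    finally have "Cc *\<^sub>v u = 0\<^sub>v k" using Cz by simp
    then have "u \<in> mat_kernel Cc" using mat_kernelI[OF Cc u] by simp
    then have "u \<in> mat_image V" using Vim by simp
    then obtain b where b: "b \<in> carrier_vec d" and Vb: "V *\<^sub>v b = u"
      using V' unfolding mat_image_def by blast
    have "W0 *\<^sub>v ((Cc *\<^sub>v z) @\<^sub>v b) = X *\<^sub>v (Cc *\<^sub>v z) + V *\<^sub>v b"
      unfolding W0_def by (rule hcat_mult_vec[OF X V' Cz b])
    also have "\<dots> = z" unfolding Vb u_def using X Cz z by (intro eq_vecI) auto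
    finally show ?thesis using Cz b nkd by (intro bexI[of _ "(Cc *\<^sub>v z) @\<^sub>v b"]) auto
  qed
  obtain Q where Q: "Q \<in> carrier_mat n n" and W0Q: "W0 * Q = 1\<^sub>m n"
    using surj_right_inv[OF W0 W0surj] by blast
  have "det W0 \<noteq> 0" using det_mult[OF W0 Q] W0Q by auto
  then have W0inj: "\<And>v. v \<in> carrier_vec n \<Longrightarrow> W0 *\<^sub>v v = 0\<^sub>v n \<Longrightarrow> v = 0\<^sub>v n"
    using det_0_iff_vec_prod_zero_field[OF W0] by blast
  have Vinj: "x = 0\<^sub>v d" if x: "x \<in> carrier_vec d" and Vx: "V *\<^sub>v x = 0\<^sub>v n" for x
  proof -
    have "W0 *\<^sub>v (0\<^sub>v k @\<^sub>v x) = X *\<^sub>v 0\<^sub>v k + V *\<^sub>v x"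
      unfolding W0_def by (rule hcat_mult_vec[OF X V' _ x]) simp
    also have "\<dots> = 0\<^sub>v n" using Vx X by (intro eq_vecI) auto
    finally have "0\<^sub>v k @\<^sub>v x = 0\<^sub>v n" using W0inj[of "0\<^sub>v k @\<^sub>v x"] x nkd by auto
    then have "\<forall>i<d. x $ i = 0"
    proof (intro allI impI)
      fix i assume eq: "0\<^sub>v k @\<^sub>v x = 0\<^sub>v n" and i: "i < d"
      have "x $ i = (0\<^sub>v k @\<^sub>v x) $ (k + i)" using x i by simp
      also have "\<dots> = 0\<^sub>v n $ (k + i)" using eq by simp
      also have "\<dots> = 0" using i nkd by simp
      finally show "x $ i = 0" .
    qed
    then show ?thesis using x by (intro eq_vecI) auto
  qed
  obtain PV: "pinv V \<in> carrier_mat d n" and PVV: "pinv V * V = 1\<^sub>m d"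
    using pinv_left[OF V' Vinj] by blast
  define N where "N = pinv V * (1\<^sub>m n - X * Cc)"
  have XC: "X * Cc \<in> carrier_mat n n" using X Cc by simp
  have IXC: "1\<^sub>m n - X * Cc \<in> carrier_mat n n" by (rule minus_carrier_mat[OF XC])
  have N: "N \<in> carrier_mat d n" unfolding N_def using PV IXC by simp
  have U': "U = Cc @\<^sub>r N" unfolding U_def N_def X_def M_def ..
  have W': "W = hcat X V" unfolding W_def X_def M_def ..
  have "(1\<^sub>m n - X * Cc) * X = X - X * Cc * X"
    using minus_mult_distrib_mat[of "1\<^sub>m n" n n "X * Cc" X k] X XC by simp
  also have "X * Cc * X = X" using assoc_mult_mat[OF X Cc X] CX X by simp
  finally have "(1\<^sub>m n - X * Cc) * X = 0\<^sub>m n k" using X by (intro eq_matI) auto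
  then have NX: "N * X = 0\<^sub>m d k" unfolding N_def using assoc_mult_mat[OF PV IXC X] PV by simp
  have "(1\<^sub>m n - X * Cc) * V = V - X * Cc * V"
    using minus_mult_distrib_mat[of "1\<^sub>m n" n n "X * Cc" V d] V' XC by simp
  also have "X * Cc * V = 0\<^sub>m n d" using assoc_mult_mat[OF X Cc V'] CV X by simp
  also have "V - 0\<^sub>m n d = V" using V' by (intro eq_matI) auto
  finally have "(1\<^sub>m n - X * Cc) * V = V" .
  then have NV: "N * V = 1\<^sub>m d" unfolding N_def using assoc_mult_mat[OF PV IXC V'] PVV by simp
  have "Cc @\<^sub>r N \<in> carrier_mat (k + d) n" by (rule carrier_append_rows[OF Cc N])
  then have Uc: "U \<in> carrier_mat n n" unfolding U' using nkd by simp
  have Wc: "W \<in> carrier_mat n n" unfolding W' using hcat_carrier[OF X V'] nkd by simp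
  have "U * W = four_block_mat (Cc * X + 0\<^sub>m k 0 * 0\<^sub>m 0 k) (Cc * V + 0\<^sub>m k 0 * 0\<^sub>m 0 d)
      (N * X + 0\<^sub>m d 0 * 0\<^sub>m 0 k) (N * V + 0\<^sub>m d 0 * 0\<^sub>m 0 d)"
  proof -
    have U2: "U = four_block_mat Cc (0\<^sub>m k 0) N (0\<^sub>m d 0)" unfolding U' append_rows_def using Cc N by simp
    have W2: "W = four_block_mat X V (0\<^sub>m 0 k) (0\<^sub>m 0 d)" unfolding W' hcat_def using X V' by simp
    show ?thesis unfolding U2 W2
      by (rule mult_four_block_mat[OF Cc _ N _ X V']) auto
  qed
  also have "\<dots> = four_block_mat (1\<^sub>m k) (0\<^sub>m k d) (0\<^sub>m d k) (1\<^sub>m d)"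
    unfolding CX CV NX NV by simp
  also have "\<dots> = 1\<^sub>m n" using nkd by simp
  finally have UW: "U * W = 1\<^sub>m n" .
  have WU: "W * U = 1\<^sub>m n" by (rule mat_mult_left_right_inverse[OF Uc Wc UW])
  have "invertible_mat U" unfolding invertible_mat_def inverts_mat_def square_mat.simps
    using Uc Wc UW WU by auto
  then show ?thesis using Uc UW WU by blast
qed


theorem lemma1:
  fixes n m p q r :: nat
    and A B C :: "real mat"
    and f :: "real \<Rightarrow> real vec \<Rightarrow> real vec \<Rightarrow> real vec"
    and L :: "real \<Rightarrow> real mat"
    and V :: "real mat"
  assumes "m \<ge> p"
    and A: "A \<in> carrier_mat n n" and B: "B \<in> carrier_mat n m" and C: "C \<in> carrier_mat p n"
    and f_dim: "\<And>t x u. x \<in> carrier_vec n \<Longrightarrow> u \<in> carrier_vec m \<Longrightarrow> f t x u \<in> carrier_vec n"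
    and f_cont: "\<And>t x u \<epsilon>. x \<in> carrier_vec n \<Longrightarrow> u \<in> carrier_vec m \<Longrightarrow> \<epsilon> > 0 \<Longrightarrow>
        \<exists>\<delta>>0. \<forall>t' x' u'. x' \<in> carrier_vec n \<longrightarrow> u' \<in> carrier_vec m \<longrightarrow>
          \<bar>t' - t\<bar> < \<delta> \<longrightarrow> vnorm (x' - x) < \<delta> \<longrightarrow> vnorm (u' - u) < \<delta> \<longrightarrow>
          vnorm (f t' x' u' - f t x u) < \<epsilon>"
    and f_bdd: "\<exists>M. \<forall>t x u. x \<in> carrier_vec n \<longrightarrow> u \<in> carrier_vec m \<longrightarrow> vnorm (f t x u) \<le> M"
    and L_dim: "\<And>t. L t \<in> carrier_mat m m"
    and L_smooth: "\<And>i j k t. i < m \<Longrightarrow> j < m \<Longrightarrow>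
        ((Derivative.deriv ^^ k) (\<lambda>s. L s $$ (i,j))) differentiable (at t)"
    and L_bdd: "\<And>k. k \<le> n \<Longrightarrow> \<exists>M. \<forall>t i j. i < m \<longrightarrow> j < m \<longrightarrow>
        \<bar>(Derivative.deriv ^^ k) (\<lambda>s. L s $$ (i,j)) t\<bar> \<le> M"
    and rk_BL: "\<And>t. rk (B * L t) = q" and "q \<ge> p"
    and P2_BL: "\<And>k t. k + 2 \<le> r \<Longrightarrow> C * (A ^\<^sub>m k) * B * L t = 0\<^sub>m p m"
    and P2_f: "\<And>k t x u. k + 2 \<le> r \<Longrightarrow> x \<in> carrier_vec n \<Longrightarrow> u \<in> carrier_vec m \<Longrightarrow>
        C * (A ^\<^sub>m k) *\<^sub>v f t x u = 0\<^sub>v p"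
    and rk_Gamma: "\<And>t. rk (C * (A ^\<^sub>m (r - 1)) * B * L t) = p"
    and V: "V \<in> carrier_mat n (n - rk (calC A C r))"
    and V_im: "mat_image V = mat_kernel (calC A C r)"
  shows "\<forall>t::real.
      rk (calC A C r) = p * r \<and>
      rk (calC A C r * calB A B L r t) = p * r \<and>
      (\<forall>i j a b. 1 \<le> i \<longrightarrow> i \<le> r \<longrightarrow> 1 \<le> j \<longrightarrow> j \<le> r \<longrightarrow> a < p \<longrightarrow> b < m \<longrightarrow>
          (i + j \<le> r \<longrightarrow> (calC A C r * calB A B L r t) $$ ((i - 1) * p + a, (j - 1) * m + b) = 0) \<and>
          (i + j = r + 1 \<longrightarrow> (calC A C r * calB A B L r t) $$ ((i - 1) * p + a, (j - 1) * m + b)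
              = (-1) ^ (j - 1) * (C * (A ^\<^sub>m (r - 1)) * B * L t) $$ (a, b))) \<and>
      calU A B C L r V t \<in> carrier_mat n n \<and>
      invertible_mat (calU A B C L r V t) \<and>
      calU A B C L r V t * hcat (calB A B L r t * pinv (calC A C r * calB A B L r t)) V = 1\<^sub>m n \<and>
      hcat (calB A B L r t * pinv (calC A C r * calB A B L r t)) V * calU A B C L r V t = 1\<^sub>m n"
proof -
  interpret S: sysl n m p r A B C L
    using A B C L_dim L_smooth P2_BL by unfold_locales auto
  show ?thesis
  proof (intro allI)
    fix t :: real
    have rkG: "rk (S.Gam t) = p" using rk_Gamma unfolding S.Gam_def .
    have MMc: "S.MM t \<in> carrier_mat (r*p) (r*m)" by (rule S.MM_carrier)
    have Cc: "calC A C r \<in> carrier_mat (r*p) n" by (rule S.calC_carrier)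
    have Bc: "calB A B L r t \<in> carrier_mat n (r*m)" by (rule S.calB_carrier)
    have surjM: "\<And>y. y \<in> carrier_vec (r*p) \<Longrightarrow> \<exists>x\<in>carrier_vec (r*m). S.MM t *\<^sub>v x = y"
      using S.MM_surj[OF rkG] by blast
    obtain R where R: "R \<in> carrier_mat (r*m) (r*p)" and MR: "S.MM t * R = 1\<^sub>m (r*p)"
      using surj_right_inv[OF MMc surjM] by blast
    have rkM: "rk (S.MM t) = r*p" by (rule surj_rank[OF MMc surjM])
    have surjC: "\<exists>x\<in>carrier_vec n. calC A C r *\<^sub>v x = y" if y: "y \<in> carrier_vec (r*p)" for y
    proof -
      obtain x where x: "x \<in> carrier_vec (r*m)" and Mx: "S.MM t *\<^sub>v x = y" using surjM[OF y] by blast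
      have "calC A C r *\<^sub>v (calB A B L r t *\<^sub>v x) = y"
        using Mx assoc_mult_mat_vec[OF Cc Bc x] unfolding S.MM_def by simp
      then show ?thesis using Bc x by (intro bexI[of _ "calB A B L r t *\<^sub>v x"]) auto
    qed
    have rkC: "rk (calC A C r) = r*p" by (rule surj_rank[OF Cc surjC])
    have kn: "r*p \<le> n"
    proof -
      interpret vs: vec_space "TYPE(real)" "r*p" .
      have "vs.rank (calC A C r) \<le> n" by (rule vs.rank_le_nc[OF Cc])
      then show ?thesis using rkC Cc unfolding rk_def by simp
    qed
    have blocks: "\<forall>i j a b. 1 \<le> i \<longrightarrow> i \<le> r \<longrightarrow> 1 \<le> j \<longrightarrow> j \<le> r \<longrightarrow> a < p \<longrightarrow> b < m \<longrightarrow>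
          (i + j \<le> r \<longrightarrow> (calC A C r * calB A B L r t) $$ ((i - 1) * p + a, (j - 1) * m + b) = 0) \<and>
          (i + j = r + 1 \<longrightarrow> (calC A C r * calB A B L r t) $$ ((i - 1) * p + a, (j - 1) * m + b)
              = (-1) ^ (j - 1) * (C * (A ^\<^sub>m (r - 1)) * B * L t) $$ (a, b))"
    proof (intro allI impI conjI)
      fix i j a b assume i1: "1 \<le> i" and ir: "i \<le> r" and j1: "1 \<le> j" and jr: "j \<le> r"
        and a: "a < p" and b: "b < m"
      have i': "i - 1 < r" and j': "j - 1 < r" using i1 ir j1 jr by auto
      have E: "(calC A C r * calB A B L r t) $$ ((i - 1) * p + a, (j - 1) * m + b)
          = (C * A ^\<^sub>m (i - 1) * S.D (j - 1) t) $$ (a,b)"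
        using S.MM_entry[OF i' a j' b, of t] unfolding S.MM_def .
      {
        assume "i + j \<le> r"
        then have "(i - 1) + (j - 1) + 2 \<le> r" using i1 j1 by simp
        then have "C * A ^\<^sub>m (i - 1) * S.D (j - 1) t = 0\<^sub>m p m" using S.CAD by blast
        then show "(calC A C r * calB A B L r t) $$ ((i - 1) * p + a, (j - 1) * m + b) = 0"
          using E a b by simp
      }
      {
        assume "i + j = r + 1"
        then have "(i - 1) + (j - 1) + 1 = r" using i1 j1 by simp
        then have "C * A ^\<^sub>m (i - 1) * S.D (j - 1) t = (-1) ^ (j - 1) \<cdot>\<^sub>m S.Gam t" using S.CAD by blast
        then show "(calC A C r * calB A B L r t) $$ ((i - 1) * p + a, (j - 1) * m + b)
              = (-1) ^ (j - 1) * (C * (A ^\<^sub>m (r - 1)) * B * L t) $$ (a, b)"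
        proof -
          have GE: "((-1) ^ (j - 1) \<cdot>\<^sub>m S.Gam t) $$ (a,b) = (-1) ^ (j - 1) * S.Gam t $$ (a,b)"
            using S.Gam_carrier[of t] a b by simp
          show ?thesis unfolding E \<open>C * A ^\<^sub>m (i - 1) * S.D (j - 1) t = (-1) ^ (j - 1) \<cdot>\<^sub>m S.Gam t\<close> GE
            unfolding S.Gam_def ..
        qed
      }
    qed
    have V': "V \<in> carrier_mat n (n - r*p)" using V rkC by simp
    have CBR: "calC A C r * calB A B L r t * R = 1\<^sub>m (r*p)" using MR unfolding S.MM_def .
    have dA: "dim_row A = n" using A by simp
    have UP: "calU A B C L r V t \<in> carrier_mat n n \<and> invertible_mat (calU A B C L r V t) \<and>
      calU A B C L r V t * hcat (calB A B L r t * pinv (calC A C r * calB A B L r t)) V = 1\<^sub>m n \<and>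
      hcat (calB A B L r t * pinv (calC A C r * calB A B L r t)) V * calU A B C L r V t = 1\<^sub>m n"
      unfolding calU_def calN_def dA by (rule U_part[OF Cc Bc R CBR V' V_im kn])
    show "rk (calC A C r) = p * r \<and>
      rk (calC A C r * calB A B L r t) = p * r \<and>
      (\<forall>i j a b. 1 \<le> i \<longrightarrow> i \<le> r \<longrightarrow> 1 \<le> j \<longrightarrow> j \<le> r \<longrightarrow> a < p \<longrightarrow> b < m \<longrightarrow>
          (i + j \<le> r \<longrightarrow> (calC A C r * calB A B L r t) $$ ((i - 1) * p + a, (j - 1) * m + b) = 0) \<and>
          (i + j = r + 1 \<longrightarrow> (calC A C r * calB A B L r t) $$ ((i - 1) * p + a, (j - 1) * m + b)
              = (-1) ^ (j - 1) * (C * (A ^\<^sub>m (r - 1)) * B * L t) $$ (a, b))) \<and>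
      calU A B C L r V t \<in> carrier_mat n n \<and>
      invertible_mat (calU A B C L r V t) \<and>
      calU A B C L r V t * hcat (calB A B L r t * pinv (calC A C r * calB A B L r t)) V = 1\<^sub>m n \<and>
      hcat (calB A B L r t * pinv (calC A C r * calB A B L r t)) V * calU A B C L r V t = 1\<^sub>m n"
      using rkC rkM blocks UP unfolding S.MM_def by (simp add: mult.commute)
  qed
qed

end
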